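(* Let $n\ge1$ and $\alpha,\beta,u,v\in V_n$. There exists a valid rectangular pattern with tiles in $\mathcal T'_n$ whose right, top, left and bottom labels are respectively $\tau_n(\alpha)$, $\tau_n(\beta)$, $\tau_n(u)$ and $\tau_n(v)$ if and only if the Wang tile $(\alpha,\beta,u,v)$ (right $\alpha$, top $\beta$, left $u$, bottom $v$) belongs to $\mathcal T'_n$.
   Context: Write $\bar m=m+1$. $V_n=\{(v_0,v_1,v_2)\in\mathbb{Z}^3: 0\le v_0\le v_1\le 1,\ v_1\le v_2\le n+1\}$, elements written as words $v_0v_1v_2$. A Wang tile is $t=(a,b,c,d)$ with $\mathrm{RIGHT}(t)=a$, $\mathrm{TOP}(t)=b$, $\mathrm{LEFT}(t)=c$, $\mathrm{BOTTOM}(t)=d$; $\hat t=(b,a,d,c)$, $\hat S=\{\hat t:t\in S\}$. Define (as (right, top, left, bottom)): $W_n=\{(11(i+1),11(j+1),11i,11j):1\le i,j\le n\}$; $B'_n=\{(00(i+1),111,00i,11n):0\le i\le n\}$; $G_n=\{(01(i+1),111,00i,11(n+1)):0\le i\le n\}$; $Y_n=\{(01(i+1),112,01i,11(n+1)):1\le i\le n\}$; $A_n=\{(00(i+1),112,01i,11n):1\le i\le n\}$; $J'_n=\{((0,k,l),(0,r,s),(0,s,r+n),(0,l,k+n)):(k,l),(r,s)\in\{(0,0),(0,1),(1,1)\}\}$. $\mathcal T'_n=W_n\cup B'_n\cup G_n\cup Y_n\cup A_n\cup\hat B'_n\cup\hat G_n\cup\hat Y_n\cup\hat A_n\cup J'_n$.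 A rectangular pattern is valid if adjacent tiles agree on common edges; its bottom (top) labels are those of its bottom (top) row read left to right, its left (right) labels those of its left (right) column read bottom to top. $\tau_n:V_n\to V_n^*$ is $\tau_n(xyz)=(0,x-y+1,n)\cdot(11n)^{z-x-1}\cdot(11\bar n)^{n+1-z}$ if $x\ne z$, and $\tau_n(xyz)=(0,x-y+1,n+1)\cdot(11\bar n)^{n-z}$ if $x=z$. *)

theory Defs
  imports Main
begin

type_synonym label = "int \<times> int \<times> int"
type_synonym tile = "label \<times> label \<times> label \<times> label"

definition RIGHT :: "tile \<Rightarrow> label" where "RIGHT t = (case t of (a,b,c,d) \<Rightarrow> a)"
definition TOP :: "tile \<Rightarrow> label" where "TOP t = (case t of (a,b,c,d) \<Rightarrow> b)"
definition LEFT :: "tile \<Rightarrow> label" where "LEFT t = (case t of (a,b,c,d) \<Rightarrow> c)"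
definition BOTTOM :: "tile \<Rightarrow> label" where "BOTTOM t = (case t of (a,b,c,d) \<Rightarrow> d)"

definition hat :: "tile \<Rightarrow> tile" where "hat t = (case t of (a,b,c,d) \<Rightarrow> (b,a,d,c))"

definition Vn :: "nat \<Rightarrow> label set" where
  "Vn n = {(v0,v1,v2). 0 \<le> v0 \<and> v0 \<le> v1 \<and> v1 \<le> 1 \<and> v1 \<le> v2 \<and> v2 \<le> int n + 1}"

definition Wn :: "nat \<Rightarrow> tile set" where
  "Wn n = {((1,1,i+1),(1,1,j+1),(1,1,i),(1,1,j)) | i j. 1 \<le> i \<and> i \<le> int n \<and> 1 \<le> j \<and> j \<le> int n}"
definition Bn' :: "nat \<Rightarrow> tile set" where
  "Bn' n = {((0,0,i+1),(1,1,1),(0,0,i),(1,1,int n)) | i. 0 \<le> i \<and> i \<le> int n}"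
definition Gn :: "nat \<Rightarrow> tile set" where
  "Gn n = {((0,1,i+1),(1,1,1),(0,0,i),(1,1,int n+1)) | i. 0 \<le> i \<and> i \<le> int n}"
definition Yn :: "nat \<Rightarrow> tile set" where
  "Yn n = {((0,1,i+1),(1,1,2),(0,1,i),(1,1,int n+1)) | i. 1 \<le> i \<and> i \<le> int n}"
definition An :: "nat \<Rightarrow> tile set" where
  "An n = {((0,0,i+1),(1,1,2),(0,1,i),(1,1,int n)) | i. 1 \<le> i \<and> i \<le> int n}"
definition Jn' :: "nat \<Rightarrow> tile set" where
  "Jn' n = {((0,k,l),(0,r,s),(0,s,r+int n),(0,l,k+int n)) | k l r s.
             (k,l) \<in> {(0,0),(0,1),(1,1)} \<and> (r,s) \<in> {(0,0),(0,1),(1,1)}}"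

definition Tn' :: "nat \<Rightarrow> tile set" where
  "Tn' n = Wn n \<union> Bn' n \<union> Gn n \<union> Yn n \<union> An n
           \<union> hat ` Bn' n \<union> hat ` Gn n \<union> hat ` Yn n \<union> hat ` An n \<union> Jn' n"

(* A rectangular pattern of width w and height h: P i j is the tile in column i
   (0 = leftmost) and row j (0 = bottom row). *)
definition valid_pattern :: "tile set \<Rightarrow> nat \<Rightarrow> nat \<Rightarrow> (nat \<Rightarrow> nat \<Rightarrow> tile) \<Rightarrow> bool" where
  "valid_pattern T w h P \<longleftrightarrow> 0 < w \<and> 0 < h \<and>
     (\<forall>i<w. \<forall>j<h. P i j \<in> T) \<and>
     (\<forall>i j. i + 1 < w \<longrightarrow> j < h \<longrightarrow> RIGHT (P i j) = LEFT (P (i+1) j)) \<and>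
     (\<forall>i j. i < w \<longrightarrow> j + 1 < h \<longrightarrow> TOP (P i j) = BOTTOM (P i (j+1)))"

definition bottom_labels :: "nat \<Rightarrow> nat \<Rightarrow> (nat \<Rightarrow> nat \<Rightarrow> tile) \<Rightarrow> label list" where
  "bottom_labels w h P = map (\<lambda>i. BOTTOM (P i 0)) [0..<w]"
definition top_labels :: "nat \<Rightarrow> nat \<Rightarrow> (nat \<Rightarrow> nat \<Rightarrow> tile) \<Rightarrow> label list" where
  "top_labels w h P = map (\<lambda>i. TOP (P i (h-1))) [0..<w]"
definition left_labels :: "nat \<Rightarrow> nat \<Rightarrow> (nat \<Rightarrow> nat \<Rightarrow> tile) \<Rightarrow> label list" where
  "left_labels w h P = map (\<lambda>j. LEFT (P 0 j)) [0..<h]"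
definition right_labels :: "nat \<Rightarrow> nat \<Rightarrow> (nat \<Rightarrow> nat \<Rightarrow> tile) \<Rightarrow> label list" where
  "right_labels w h P = map (\<lambda>j. RIGHT (P (w-1) j)) [0..<h]"

definition tau :: "nat \<Rightarrow> label \<Rightarrow> label list" where
  "tau n v = (case v of (x,y,z) \<Rightarrow>
     if x \<noteq> z then
       (0, x-y+1, int n) # replicate (nat (z-x-1)) (1,1,int n) @ replicate (nat (int n+1-z)) (1,1,int n+1)
     else
       (0, x-y+1, int n+1) # replicate (nat (int n - z)) (1,1,int n+1))"

end

theory Submission
  imports Defs
begin


fun nxt :: "nat \<Rightarrow> label \<Rightarrow> label \<Rightarrow> tile" where
"nxt n (a0,a1,a2) (b0,b1,b2) = (if a0 = 0 then (if b0 = 0 then ((0,b2-int n,b1),(0,a2-int n,a1),(a0,a1,a2),(b0,b1,b2))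
   else ((0,b2-int n,a2+1),(1,1,1+a1),(a0,a1,a2),(b0,b1,b2)))
  else (if b0 = 0 then ((1,1,1+b1),(0,a2-int n,b2+1),(a0,a1,a2),(b0,b1,b2))
   else ((1,1,a2+1),(1,1,b2+1),(a0,a1,a2),(b0,b1,b2))))"

lemma classify: "t \<in> Tn' n \<Longrightarrow> t = nxt n (LEFT t) (BOTTOM t)"
  unfolding Tn'_def Wn_def Bn'_def Gn_def Yn_def An_def Jn'_def hat_def LEFT_def BOTTOM_def
  by auto

lemma tau_len: assumes "(x,y,z) \<in> Vn n" "n \<ge> 1" shows "length (tau n (x,y,z)) = nat (int n + 1 - x)"
  using assms unfolding Vn_def tau_def by auto

lemma tau_nth: assumes "(x,y,z) \<in> Vn n" "j < length (tau n (x,y,z))"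
  shows "tau n (x,y,z) ! j = (if j = 0 then (0, x-y+1, if z = x then int n + 1 else int n)
     else (1,1, if int j \<ge> z - x then int n + 1 else int n))"
  using assms unfolding Vn_def tau_def
  by (auto simp: nth_append nth_Cons split: nat.splits)


fun P0 :: "nat \<Rightarrow> label \<Rightarrow> label \<Rightarrow> nat \<Rightarrow> nat \<Rightarrow> tile" where
"P0 n (u0,u1,u2) (v0,v1,v2) i j =
  (let pu = u2-u0; pv = v2-v0; qu = u0-u1+1; qv = v0-v1+1; ii = int i; jj = int j;
       c = (if jj > pu then 2 else 1); d = (if ii > pv then 2 else 1) in
  if i=0 \<and> j=0 then ((0, if pv=0 then 1 else 0, qv), (0, if pu=0 then 1 else 0, qu),
        (0,qu,int n + (if pu=0 then 1 else 0)), (0,qv,int n + (if pv = 0 then 1 else 0)))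
  else if j=0 then ((0, if ii \<ge> pv then 1 else 0, qv+ii), (1,1,if ii>pv then 2 else 1),
        (0, if ii>pv then 1 else 0, qv+ii-1), (1,1, if ii\<ge>pv then int n+1 else int n))
  else if i=0 then ((1,1,if jj>pu then 2 else 1), (0, if jj\<ge>pu then 1 else 0, qu+jj),
        (1,1,if jj \<ge> pu then int n+1 else int n), (0, if jj>pu then 1 else 0, qu+jj-1))
  else ((1,1,c+ii),(1,1,d+jj),(1,1,c+ii-1),(1,1,d+jj-1)))"

declare P0.simps[simp del]

lemma P0_nxt: "nxt n (LEFT (P0 n u v i j)) (BOTTOM (P0 n u v i j)) = P0 n u v i j"
  by (cases u; cases v) (auto simp: P0.simps Let_def LEFT_def BOTTOM_def)

lemma P0_left: assumes "v \<in> Vn n" "u \<in> Vn n" "n \<ge> 1" "j < length (tau n u)"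
  shows "LEFT (P0 n u v i j) = (if i = 0 then tau n u ! j else RIGHT (P0 n u v (i-1) j))"
proof -
  obtain u0 u1 u2 where u: "u = (u0,u1,u2)" by (cases u)
  obtain v0 v1 v2 where v: "v = (v0,v1,v2)" by (cases v)
  show ?thesis using assms unfolding u v
    using tau_nth[of u0 u1 u2 n j] by (auto simp: P0.simps Let_def LEFT_def RIGHT_def Vn_def)
qed

lemma P0_bottom: assumes "u \<in> Vn n" "v \<in> Vn n" "n \<ge> 1" "i < length (tau n v)"
  shows "BOTTOM (P0 n u v i j) = (if j = 0 then tau n v ! i else TOP (P0 n u v i (j-1)))"
proof -
  obtain u0 u1 u2 where u: "u = (u0,u1,u2)" by (cases u)
  obtain v0 v1 v2 where v: "v = (v0,v1,v2)" by (cases v)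
  show ?thesis using assms unfolding u v
    using tau_nth[of v0 v1 v2 n i] by (auto simp: P0.simps Let_def BOTTOM_def TOP_def Vn_def)
qed




definition cond where "cond n a0 a1 a2 b0 b1 b2 u0 u1 u2 v0 v1 v2 \<longleftrightarrow>
 a0 = u0 \<and> b0 = v0 \<and>
 a0-a1+1 = (if v2-v0 \<le> int n - v0 then 1 else 0) \<and>
 (if a2 = a0 then int n+1 else int n) = v0-v1+1+int n - v0 \<and>
 (\<forall>j::nat. 1 \<le> j \<and> int j < int n + 1 - u0 \<longrightarrow>
    (if int j \<ge> a2-a0 then int n+1 else int n) = (if int j > u2-u0 then 2 else 1) + int n - v0) \<and>
 b0-b1+1 = (if u2-u0 \<le> int n - u0 then 1 else 0) \<and>
 (if b2 = b0 then int n+1 else int n) = u0-u1+1+int n - u0 \<and>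
 (\<forall>i::nat. 1 \<le> i \<and> int i < int n + 1 - v0 \<longrightarrow>
    (if int i \<ge> b2-b0 then int n+1 else int n) = (if int i > v2-v0 then 2 else 1) + int n - u0)"

lemma cond_sym: "cond n a0 a1 a2 b0 b1 b2 u0 u1 u2 v0 v1 v2 = cond n b0 b1 b2 a0 a1 a2 v0 v1 v2 u0 u1 u2"
  unfolding cond_def by blast

lemma hat_hat: "hat (hat t) = t" by (cases t) (auto simp: hat_def)

lemma hat_T: "t \<in> Tn' n \<Longrightarrow> hat t \<in> Tn' n"
  unfolding Tn'_def
  apply (elim UnE)
  apply (auto simp: hat_hat)
  apply (auto simp: Wn_def Jn'_def hat_def)
  done

lemma T_sym: "((a,b,u,v) \<in> Tn' n) = ((b,a,v,u) \<in> Tn' n)"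
  using hat_T[of "(a,b,u,v)" n] hat_T[of "(b,a,v,u)" n] by (auto simp: hat_def)

lemma core_back:
  assumes "((a0,a1,a2),(b0,b1,b2),(u0,u1,u2),(v0,v1,v2)) \<in> Tn' n" "n \<ge> 1"
  shows "cond n a0 a1 a2 b0 b1 b2 u0 u1 u2 v0 v1 v2"
  using assms unfolding Tn'_def
  apply (elim UnE)
  apply (auto simp: Wn_def Bn'_def Gn_def Yn_def An_def Jn'_def hat_def cond_def)
  done




lemma case11:
  assumes c: "cond n a0 a1 a2 b0 b1 b2 u0 u1 u2 v0 v1 v2" and n: "n \<ge> 1"
    and V: "(a0,a1,a2) \<in> Vn n" "(b0,b1,b2) \<in> Vn n" "(u0,u1,u2) \<in> Vn n" "(v0,v1,v2) \<in> Vn n"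
    and u0: "u0 = 1" and v0: "v0 = 1"
  shows "((a0,a1,a2),(b0,b1,b2),(u0,u1,u2),(v0,v1,v2)) \<in> Tn' n"
proof -
  have a0: "a0 = 1" "b0 = 1" using c u0 v0 by (auto simp: cond_def)
  have ones: "a1 = 1" "b1 = 1" "u1 = 1" "v1 = 1" using V a0 u0 v0 by (auto simp: Vn_def)
  have R0: "v2 \<le> int n" "a2 \<noteq> 1" "u2 \<le> int n" "b2 \<noteq> 1"
    using c a0 u0 v0 ones by (auto simp: cond_def split: if_splits)
  have RJn: "\<And>j::nat. 1 \<le> j \<Longrightarrow> int j < int n \<Longrightarrow> (int j \<ge> a2 - 1 \<longleftrightarrow> int j > u2 - 1)"
    using c a0 u0 v0 by (auto simp: cond_def split: if_splits)
  have RJ: "\<And>j::int. 1 \<le> j \<Longrightarrow> j < int n \<Longrightarrow> (j \<ge> a2 - 1 \<longleftrightarrow> j > u2 - 1)"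
  proof -
    fix j :: int assume "1 \<le> j" "j < int n"
    then show "(j \<ge> a2 - 1 \<longleftrightarrow> j > u2 - 1)" using RJn[of "nat j"] by auto
  qed
  have TIn: "\<And>j::nat. 1 \<le> j \<Longrightarrow> int j < int n \<Longrightarrow> (int j \<ge> b2 - 1 \<longleftrightarrow> int j > v2 - 1)"
    using c a0 u0 v0 by (auto simp: cond_def split: if_splits)
  have TI: "\<And>j::int. 1 \<le> j \<Longrightarrow> j < int n \<Longrightarrow> (j \<ge> b2 - 1 \<longleftrightarrow> j > v2 - 1)"
  proof -
    fix j :: int assume "1 \<le> j" "j < int n"
    then show "(j \<ge> b2 - 1 \<longleftrightarrow> j > v2 - 1)" using TIn[of "nat j"] by auto
  qed
  have bnd: "1 \<le> u2" "1 \<le> v2" "1 \<le> a2" "1 \<le> b2" "a2 \<le> int n + 1" "b2 \<le> int n + 1"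
    using V ones by (auto simp: Vn_def)
  have "a2 = u2 + 1"
  proof -
    have "a2 > u2" proof (cases "u2 \<ge> 2")
      case True then show ?thesis using RJ[of "u2 - 1"] R0 by auto
    next
      case False then show ?thesis using R0 bnd by auto
    qed
    moreover have "a2 \<le> u2 + 1" proof (cases "u2 < int n")
      case True then show ?thesis using RJ[of "u2"] bnd by auto
    next
      case False then show ?thesis using R0 bnd by auto
    qed
    ultimately show ?thesis by auto
  qed
  moreover have "b2 = v2 + 1"
  proof -
    have "b2 > v2" proof (cases "v2 \<ge> 2")
      case True then show ?thesis using TI[of "v2 - 1"] R0 by auto
    next
      case False then show ?thesis using R0 bnd by auto
    qed
    moreover have "b2 \<le> v2 + 1" proof (cases "v2 < int n")
      case True then show ?thesis using TI[of "v2"] bnd by auto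
    next
      case False then show ?thesis using R0 bnd by auto
    qed
    ultimately show ?thesis by auto
  qed
  ultimately have "((a0,a1,a2),(b0,b1,b2),(u0,u1,u2),(v0,v1,v2)) \<in> Wn n"
    using a0 ones u0 v0 R0 bnd unfolding Wn_def by auto
  then show ?thesis unfolding Tn'_def by auto
qed

lemma case01:
  assumes c: "cond n a0 a1 a2 b0 b1 b2 u0 u1 u2 v0 v1 v2" and n: "n \<ge> 1"
    and V: "(a0,a1,a2) \<in> Vn n" "(b0,b1,b2) \<in> Vn n" "(u0,u1,u2) \<in> Vn n" "(v0,v1,v2) \<in> Vn n"
    and u0: "u0 = 0" and v0: "v0 = 1"
  shows "((a0,a1,a2),(b0,b1,b2),(u0,u1,u2),(v0,v1,v2)) \<in> Tn' n"
proof -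
  have a0: "a0 = 0" "b0 = 1" using c u0 v0 by (auto simp: cond_def)
  have ones: "b1 = 1" "v1 = 1" using V a0 u0 v0 by (auto simp: Vn_def)
  have R0: "a1 = (if v2 \<le> int n then 0 else 1)" "a2 \<noteq> 0" "u2 \<le> int n" "u1 = (if b2 = 1 then 0 else 1)"
    using c a0 u0 v0 ones V by (auto simp: cond_def Vn_def split: if_splits)
  have RJn: "\<And>j::nat. 1 \<le> j \<Longrightarrow> int j < int n + 1 \<Longrightarrow> (int j \<ge> a2 \<longleftrightarrow> int j > u2)"
    using c a0 u0 v0 by (auto simp: cond_def split: if_splits)
  have RJ: "\<And>j::int. 1 \<le> j \<Longrightarrow> j < int n + 1 \<Longrightarrow> (j \<ge> a2 \<longleftrightarrow> j > u2)"
  proof -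
    fix j :: int assume "1 \<le> j" "j < int n + 1"
    then show "(j \<ge> a2 \<longleftrightarrow> j > u2)" using RJn[of "nat j"] by auto
  qed
  have TIn: "\<And>j::nat. 1 \<le> j \<Longrightarrow> int j < int n \<Longrightarrow> (int j \<ge> b2 - 1 \<and> int j \<le> v2 - 1)"
    using c a0 u0 v0 by (auto simp: cond_def split: if_splits)
  have TI: "\<And>j::int. 1 \<le> j \<Longrightarrow> j < int n \<Longrightarrow> (j \<ge> b2 - 1 \<and> j \<le> v2 - 1)"
  proof -
    fix j :: int assume "1 \<le> j" "j < int n"
    then show "(j \<ge> b2 - 1 \<and> j \<le> v2 - 1)" using TIn[of "nat j"] by auto
  qed
  have bnd: "0 \<le> u2" "1 \<le> v2" "0 \<le> a2" "1 \<le> b2" "a2 \<le> int n + 1" "b2 \<le> int n + 1" "v2 \<le> int n + 1"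
    "u1 \<le> u2" "0 \<le> a1" "a1 \<le> 1" "0 \<le> u1" "u1 \<le> 1"
    using V ones a0 u0 by (auto simp: Vn_def)
  have "a2 = u2 + 1"
  proof -
    have "a2 > u2" proof (cases "u2 \<ge> 1")
      case True then show ?thesis using RJ[of "u2"] R0 by auto
    next
      case False then show ?thesis using R0 bnd by auto
    qed
    moreover have "a2 \<le> u2 + 1" proof (cases "u2 < int n")
      case True then show ?thesis using RJ[of "u2+1"] bnd by auto
    next
      case False then show ?thesis using R0 bnd by auto
    qed
    ultimately show ?thesis by auto
  qed
  moreover have "v2 \<ge> int n" "b2 \<le> 2"
  proof -
    show "v2 \<ge> int n" proof (cases "n \<ge> 2")
      case True then show ?thesis using TI[of "int n - 1"] by auto
    next
      case False then show ?thesis using n bnd by auto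
    qed
    show "b2 \<le> 2" proof (cases "n \<ge> 2")
      case True then show ?thesis using TI[of 1] by auto
    next
      case False then show ?thesis using n bnd by auto
    qed
  qed
  ultimately have "((a0,a1,a2),(b0,b1,b2),(u0,u1,u2),(v0,v1,v2)) \<in> Bn' n \<union> Gn n \<union> Yn n \<union> An n"
    using a0 ones u0 v0 R0 bnd unfolding Bn'_def Gn_def Yn_def An_def
    by (cases "b2 = 1"; cases "v2 = int n") auto
  then show ?thesis unfolding Tn'_def by auto
qed

lemma case00:
  assumes c: "cond n a0 a1 a2 b0 b1 b2 u0 u1 u2 v0 v1 v2" and n: "n \<ge> 1"
    and V: "(a0,a1,a2) \<in> Vn n" "(b0,b1,b2) \<in> Vn n" "(u0,u1,u2) \<in> Vn n" "(v0,v1,v2) \<in> Vn n"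
    and u0: "u0 = 0" and v0: "v0 = 0"
  shows "((a0,a1,a2),(b0,b1,b2),(u0,u1,u2),(v0,v1,v2)) \<in> Tn' n"
proof -
  have a0: "a0 = 0" "b0 = 0" using c u0 v0 by (auto simp: cond_def)
  have R0: "a1 = (if v2 \<le> int n then 0 else 1)" "v1 = (if a2 = 0 then 0 else 1)"
     "b1 = (if u2 \<le> int n then 0 else 1)" "u1 = (if b2 = 0 then 0 else 1)"
    using c a0 u0 v0 V by (auto simp: cond_def Vn_def split: if_splits)
  have RJn: "\<And>j::nat. 1 \<le> j \<Longrightarrow> int j < int n + 1 \<Longrightarrow> (int j \<ge> a2 \<and> int j \<le> u2)"
    using c a0 u0 v0 by (auto simp: cond_def split: if_splits)
  have RJ: "\<And>j::int. 1 \<le> j \<Longrightarrow> j < int n + 1 \<Longrightarrow> (j \<ge> a2 \<and> j \<le> u2)"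
  proof -
    fix j :: int assume "1 \<le> j" "j < int n + 1"
    then show "(j \<ge> a2 \<and> j \<le> u2)" using RJn[of "nat j"] by auto
  qed
  have TIn: "\<And>j::nat. 1 \<le> j \<Longrightarrow> int j < int n + 1 \<Longrightarrow> (int j \<ge> b2 \<and> int j \<le> v2)"
    using c a0 u0 v0 by (auto simp: cond_def split: if_splits)
  have TI: "\<And>j::int. 1 \<le> j \<Longrightarrow> j < int n + 1 \<Longrightarrow> (j \<ge> b2 \<and> j \<le> v2)"
  proof -
    fix j :: int assume "1 \<le> j" "j < int n + 1"
    then show "(j \<ge> b2 \<and> j \<le> v2)" using TIn[of "nat j"] by auto
  qed
  have X: "a2 \<le> 1" "b2 \<le> 1" "u2 \<ge> int n" "v2 \<ge> int n"
    using RJ[of 1] RJ[of "int n"] TI[of 1] TI[of "int n"] n by auto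
  have bnd: "u2 \<le> int n + 1" "v2 \<le> int n + 1" "0 \<le> a1" "a1 \<le> a2" "0 \<le> b1" "b1 \<le> b2"
    using V a0 u0 v0 by (auto simp: Vn_def)
  have "((a0,a1,a2),(b0,b1,b2),(u0,u1,u2),(v0,v1,v2)) \<in> Jn' n"
    unfolding Jn'_def
    apply (rule CollectI)
    apply (rule exI[of _ a1], rule exI[of _ a2], rule exI[of _ b1], rule exI[of _ b2])
    using a0 u0 v0 R0 X bnd by auto
  then show ?thesis unfolding Tn'_def by auto
qed

lemma core_fwd:
  assumes c: "cond n a0 a1 a2 b0 b1 b2 u0 u1 u2 v0 v1 v2" and n: "n \<ge> 1"
    and V: "(a0,a1,a2) \<in> Vn n" "(b0,b1,b2) \<in> Vn n" "(u0,u1,u2) \<in> Vn n" "(v0,v1,v2) \<in> Vn n"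
  shows "((a0,a1,a2),(b0,b1,b2),(u0,u1,u2),(v0,v1,v2)) \<in> Tn' n"
proof -
  have "u0 = 0 \<or> u0 = 1" "v0 = 0 \<or> v0 = 1" using V by (auto simp: Vn_def)
  moreover have "u0 = 1 \<Longrightarrow> v0 = 0 \<Longrightarrow> ?thesis"
    using case01[of n b0 b1 b2 a0 a1 a2 v0 v1 v2 u0 u1 u2] c V n
    by (simp add: cond_sym T_sym)
  ultimately show ?thesis using case00[OF assms] case01[OF assms] case11[OF assms] by blast
qed




lemma labels_nth:
  "left_labels w h P ! j = LEFT (P 0 j)" if "j < h" for j
  using that by (simp add: left_labels_def)

lemma P_eq_P0:
  assumes val: "valid_pattern (Tn' n) w h P" and L: "left_labels w h P = tau n u"
    and B: "bottom_labels w h P = tau n v" and V: "u \<in> Vn n" "v \<in> Vn n" and n: "n \<ge> 1"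
  shows "i < w \<Longrightarrow> j < h \<Longrightarrow> P i j = P0 n u v i j"
proof (induction i arbitrary: j)
  have hl: "length (tau n u) = h" using L by (metis left_labels_def length_map length_upt minus_nat.diff_0)
  have wl: "length (tau n v) = w" using B by (metis bottom_labels_def length_map length_upt minus_nat.diff_0)
  have Lj: "LEFT (P 0 j) = tau n u ! j" if "j < h" for j
    using L that unfolding left_labels_def by (metis add_0 diff_zero nth_map_upt)
  have Bi: "BOTTOM (P i 0) = tau n v ! i" if "i < w" for i
    using B that unfolding bottom_labels_def by (metis add_0 diff_zero nth_map_upt)
  have mem: "P i j \<in> Tn' n" if "i < w" "j < h" for i j using val that unfolding valid_pattern_def by auto
  have adjR: "RIGHT (P i j) = LEFT (P (i+1) j)" if "i+1 < w" "j < h" for i j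
    using val that unfolding valid_pattern_def by auto
  have adjT: "TOP (P i j) = BOTTOM (P i (j+1))" if "i < w" "j+1 < h" for i j
    using val that unfolding valid_pattern_def by auto
  have step: "P i j = P0 n u v i j"
    if ij: "i < w" "j < h" and lft: "LEFT (P i j) = LEFT (P0 n u v i j)"
     and bot: "BOTTOM (P i j) = BOTTOM (P0 n u v i j)" for i j
  proof -
    have "P i j = nxt n (LEFT (P i j)) (BOTTOM (P i j))" using classify mem[OF ij] by blast
    also have "\<dots> = P0 n u v i j" using lft bot P0_nxt by simp
    finally show ?thesis .
  qed
  {
    case 0
    show ?case using 0
    proof (induction j)
      case 0
      show ?case
        apply (rule step)
        using 0 Lj Bi P0_left[OF V(2,1) n, where j=0 and i=0] P0_bottom[OF V n, where i=0 and j=0] hl wl by auto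
    next
      case (Suc j)
      show ?case
        apply (rule step)
        using Suc Lj P0_left[OF V(2,1) n, where j="Suc j" and i=0] P0_bottom[OF V n, where i=0 and j="Suc j"] hl wl
          adjT[of 0 j] by auto
    qed
  next
    case (Suc i)
    note outerIH = Suc.IH
    show ?case using Suc.prems
    proof (induction j)
      case 0
      show ?case
        apply (rule step)
        using 0 Bi outerIH[of 0] P0_left[OF V(2,1) n, where j=0 and i="Suc i"] P0_bottom[OF V n, where i="Suc i" and j=0] hl wl
          adjR[of i 0] by auto
    next
      case (Suc j)
      show ?case
        apply (rule step)
        using Suc outerIH[of "Suc j"] P0_left[OF V(2,1) n, where j="Suc j" and i="Suc i"] P0_bottom[OF V n, where i="Suc i" and j="Suc j"] hl wl
          adjT[of "Suc i" j] adjR[of i "Suc j"] by auto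
    qed
  }
qed




lemma P0_right_last:
  assumes "(u0,u1,u2) \<in> Vn n" "(v0,v1,v2) \<in> Vn n" "n \<ge> 1"
  shows "RIGHT (P0 n (u0,u1,u2) (v0,v1,v2) (nat (int n - v0)) j) =
    (if j = 0 then (0, if v2-v0 \<le> int n - v0 then 1 else 0, v0-v1+1+int n - v0)
     else (1,1,(if int j > u2-u0 then 2 else 1) + int n - v0))"
  using assms by (auto simp: P0.simps Let_def RIGHT_def Vn_def)

lemma P0_top_last:
  assumes "(u0,u1,u2) \<in> Vn n" "(v0,v1,v2) \<in> Vn n" "n \<ge> 1"
  shows "TOP (P0 n (u0,u1,u2) (v0,v1,v2) i (nat (int n - u0))) =
    (if i = 0 then (0, if u2-u0 \<le> int n - u0 then 1 else 0, u0-u1+1+int n - u0)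
     else (1,1,(if int i > v2-v0 then 2 else 1) + int n - u0))"
  using assms by (auto simp: P0.simps Let_def TOP_def Vn_def)

lemma P0_swap: "P0 n u v i j = hat (P0 n v u j i)"
  by (cases u; cases v) (auto simp: P0.simps Let_def hat_def)

lemma row_mem:
  assumes V: "(u0,u1,u2) \<in> Vn n" "(v0,v1,v2) \<in> Vn n" and n: "n \<ge> 1"
    and ij: "int i < int n + 1 - v0" "i > 0"
  shows "P0 n (u0,u1,u2) (v0,v1,v2) i 0 \<in> Tn' n"
proof -
  have "P0 n (u0,u1,u2) (v0,v1,v2) i 0 \<in> Bn' n \<union> Gn n \<union> Yn n \<union> An n"
    using V ij unfolding Bn'_def Gn_def Yn_def An_def
    by (auto simp: P0.simps Vn_def Let_def)
  then show ?thesis unfolding Tn'_def by auto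
qed

lemma P0_mem:
  assumes c: "cond n a0 a1 a2 b0 b1 b2 u0 u1 u2 v0 v1 v2"
    and V: "(u0,u1,u2) \<in> Vn n" "(v0,v1,v2) \<in> Vn n" and n: "n \<ge> 1"
    and ij: "int i < int n + 1 - v0" "int j < int n + 1 - u0"
  shows "P0 n (u0,u1,u2) (v0,v1,v2) i j \<in> Tn' n"
proof -
  consider "i = 0 \<and> j = 0" | "i > 0 \<and> j = 0" | "i = 0 \<and> j > 0" | "i > 0 \<and> j > 0" by (cases "i = 0"; cases "j = 0") auto
  then show ?thesis
  proof cases
    case 1
    have "P0 n (u0,u1,u2) (v0,v1,v2) i j \<in> Jn' n"
      unfolding Jn'_def
      apply (rule CollectI)
      apply (rule exI[of _ "if v2 - v0 = 0 then 1 else 0"], rule exI[of _ "v0-v1+1"],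
             rule exI[of _ "if u2 - u0 = 0 then 1 else 0"], rule exI[of _ "u0-u1+1"])
      using 1 V by (auto simp: P0.simps Vn_def Let_def)
    then show ?thesis unfolding Tn'_def by auto
  next
    case 2
    then show ?thesis using row_mem[OF V n, of i] ij by auto
  next
    case 3
    have "P0 n (v0,v1,v2) (u0,u1,u2) j 0 \<in> Tn' n" using row_mem[OF V(2,1) n, of j] ij 3 by auto
    then have "hat (P0 n (v0,v1,v2) (u0,u1,u2) j 0) \<in> Tn' n" by (rule hat_T)
    then show ?thesis using 3 P0_swap[of n "(u0,u1,u2)" "(v0,v1,v2)" i j] by simp
  next
    case 4
    have cR: "\<forall>j::nat. 1 \<le> j \<and> int j < int n + 1 - u0 \<longrightarrow>
    (if int j \<ge> a2-a0 then int n+1 else int n) = (if int j > u2-u0 then 2 else 1) + int n - v0"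
      and cT: "\<forall>i::nat. 1 \<le> i \<and> int i < int n + 1 - v0 \<longrightarrow>
    (if int i \<ge> b2-b0 then int n+1 else int n) = (if int i > v2-v0 then 2 else 1) + int n - u0"
      using c unfolding cond_def by blast+
    have cj: "(if int j > u2-u0 then 2 else 1) + int n - v0 \<le> int n + 1"
    proof -
      have "(if int j \<ge> a2-a0 then int n+1 else int n) = (if int j > u2-u0 then 2 else 1) + int n - v0"
        using cR 4 ij by auto
      then show ?thesis by (smt (verit))
    qed
    have di: "(if int i > v2-v0 then 2 else 1) + int n - u0 \<le> int n + 1"
    proof -
      have "(if int i \<ge> b2-b0 then int n+1 else int n) = (if int i > v2-v0 then 2 else 1) + int n - u0"
        using cT 4 ij by auto
      then show ?thesis by (smt (verit))
    qed
    define c where "c = (if int j > u2-u0 then 2 else 1::int)"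
    define d where "d = (if int i > v2-v0 then 2 else 1::int)"
    have P: "P0 n (u0,u1,u2) (v0,v1,v2) i j = ((1,1,(c+int i-1)+1),(1,1,(d+int j-1)+1),(1,1,c+int i-1),(1,1,d+int j-1))"
      using 4 unfolding c_def d_def by (simp add: P0.simps Let_def)
    have b: "1 \<le> c+int i-1" "c+int i-1 \<le> int n" "1 \<le> d+int j-1" "d+int j-1 \<le> int n"
      using 4 ij cj di unfolding c_def d_def by (auto split: if_splits)
    have "P0 n (u0,u1,u2) (v0,v1,v2) i j \<in> Wn n"
      unfolding P Wn_def using b by blast
    then show ?thesis unfolding Tn'_def by auto
  qed
qed




theorem proposition5p9:
  fixes n :: nat and \<alpha> \<beta> u v :: label
  assumes "n \<ge> 1"
    and "\<alpha> \<in> Vn n" and "\<beta> \<in> Vn n" and "u \<in> Vn n" and "v \<in> Vn n"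
  shows "(\<exists>w h P. valid_pattern (Tn' n) w h P \<and>
            right_labels w h P = tau n \<alpha> \<and> top_labels w h P = tau n \<beta> \<and>
            left_labels w h P = tau n u \<and> bottom_labels w h P = tau n v)
         \<longleftrightarrow> (\<alpha>, \<beta>, u, v) \<in> Tn' n"
proof -
  note n = assms(1)
  obtain a0 a1 a2 where a: "\<alpha> = (a0,a1,a2)" by (cases \<alpha>)
  obtain b0 b1 b2 where b: "\<beta> = (b0,b1,b2)" by (cases \<beta>)
  obtain u0 u1 u2 where u: "u = (u0,u1,u2)" by (cases u)
  obtain v0 v1 v2 where v: "v = (v0,v1,v2)" by (cases v)
  have Va: "(a0,a1,a2) \<in> Vn n" and Vb: "(b0,b1,b2) \<in> Vn n"
    and Vu: "(u0,u1,u2) \<in> Vn n" and Vv: "(v0,v1,v2) \<in> Vn n"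
    using assms a b u v by auto
  have bd: "0 \<le> a0" "a0 \<le> 1" "0 \<le> b0" "b0 \<le> 1" "0 \<le> u0" "u0 \<le> 1" "0 \<le> v0" "v0 \<le> 1"
    using Va Vb Vu Vv by (auto simp: Vn_def)
  define h where "h = nat (int n + 1 - u0)"
  define w where "w = nat (int n + 1 - v0)"
  have hl: "length (tau n u) = h" unfolding h_def u using tau_len[OF Vu n] .
  have wl: "length (tau n v) = w" unfolding w_def v using tau_len[OF Vv n] .
  have al: "length (tau n \<alpha>) = nat (int n + 1 - a0)" unfolding a using tau_len[OF Va n] .
  have bl: "length (tau n \<beta>) = nat (int n + 1 - b0)" unfolding b using tau_len[OF Vb n] .
  have wpos: "w > 0" "h > 0" using bd n unfolding w_def h_def by auto
  have wm1: "w - 1 = nat (int n - v0)" "h - 1 = nat (int n - u0)" using bd n unfolding w_def h_def by auto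
  have tau_a: "tau n \<alpha> ! j = (if j = 0 then (0, a0-a1+1, if a2 = a0 then int n + 1 else int n)
     else (1,1, if int j \<ge> a2 - a0 then int n + 1 else int n))" if "j < length (tau n \<alpha>)" for j
    unfolding a using tau_nth[OF Va] that a by simp
  have tau_b: "tau n \<beta> ! j = (if j = 0 then (0, b0-b1+1, if b2 = b0 then int n + 1 else int n)
     else (1,1, if int j \<ge> b2 - b0 then int n + 1 else int n))" if "j < length (tau n \<beta>)" for j
    unfolding b using tau_nth[OF Vb] that b by simp
  have RL: "RIGHT (P0 n u v (w - 1) j) =
    (if j = 0 then (0, if v2-v0 \<le> int n - v0 then 1 else 0, v0-v1+1+int n - v0)
     else (1,1,(if int j > u2-u0 then 2 else 1) + int n - v0))" for j
    unfolding u v wm1 using P0_right_last[OF Vu Vv n] .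
  have TL: "TOP (P0 n u v i (h - 1)) =
    (if i = 0 then (0, if u2-u0 \<le> int n - u0 then 1 else 0, u0-u1+1+int n - u0)
     else (1,1,(if int i > v2-v0 then 2 else 1) + int n - u0))" for i
    unfolding u v wm1 using P0_top_last[OF Vu Vv n] .
  show ?thesis
  proof
    assume "\<exists>w h P. valid_pattern (Tn' n) w h P \<and>
            right_labels w h P = tau n \<alpha> \<and> top_labels w h P = tau n \<beta> \<and>
            left_labels w h P = tau n u \<and> bottom_labels w h P = tau n v"
    then obtain w' h' P where val: "valid_pattern (Tn' n) w' h' P"
      and R: "right_labels w' h' P = tau n \<alpha>" and T: "top_labels w' h' P = tau n \<beta>"
      and L: "left_labels w' h' P = tau n u" and B: "bottom_labels w' h' P = tau n v" by blast
    have hh: "h' = h" using L hl by (metis left_labels_def length_map length_upt minus_nat.diff_0)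
    have ww: "w' = w" using B wl by (metis bottom_labels_def length_map length_upt minus_nat.diff_0)
    have PP: "P i j = P0 n u v i j" if "i < w" "j < h" for i j
      using P_eq_P0[OF val L B assms(4,5) n] that hh ww by auto
    have ha: "length (tau n \<alpha>) = h" using R hh by (metis right_labels_def length_map length_upt minus_nat.diff_0)
    have wb: "length (tau n \<beta>) = w" using T ww by (metis top_labels_def length_map length_upt minus_nat.diff_0)
    have a0u0: "a0 = u0" using ha al h_def bd by auto
    have b0v0: "b0 = v0" using wb bl w_def bd by auto
    have Rj: "RIGHT (P0 n u v (w - 1) j) = tau n \<alpha> ! j" if "j < h" for j
    proof -
      have "tau n \<alpha> ! j = right_labels w h P ! j" using R hh ww by simp
      also have "\<dots> = RIGHT (P (w-1) j)" unfolding right_labels_def using that by simp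
      also have "\<dots> = RIGHT (P0 n u v (w - 1) j)" using PP[of "w-1" j] that wpos by simp
      finally show ?thesis by simp
    qed
    have Ti: "TOP (P0 n u v i (h - 1)) = tau n \<beta> ! i" if "i < w" for i
    proof -
      have "tau n \<beta> ! i = top_labels w h P ! i" using T hh ww by simp
      also have "\<dots> = TOP (P i (h-1))" unfolding top_labels_def using that by simp
      also have "\<dots> = TOP (P0 n u v i (h - 1))" using PP[of i "h-1"] that wpos by simp
      finally show ?thesis by simp
    qed
    have c: "cond n a0 a1 a2 b0 b1 b2 u0 u1 u2 v0 v1 v2"
    proof -
      have R0: "a0-a1+1 = (if v2-v0 \<le> int n - v0 then 1 else 0) \<and>
        (if a2 = a0 then int n+1 else int n) = v0-v1+1+int n - v0"
        using Rj[of 0] RL[of 0] tau_a[of 0] wpos ha by auto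
      have T0: "b0-b1+1 = (if u2-u0 \<le> int n - u0 then 1 else 0) \<and>
        (if b2 = b0 then int n+1 else int n) = u0-u1+1+int n - u0"
        using Ti[of 0] TL[of 0] tau_b[of 0] wpos wb by auto
      have RJ: "\<forall>j::nat. 1 \<le> j \<and> int j < int n + 1 - u0 \<longrightarrow>
        (if int j \<ge> a2-a0 then int n+1 else int n) = (if int j > u2-u0 then 2 else 1) + int n - v0"
      proof (intro allI impI)
        fix j :: nat assume j: "1 \<le> j \<and> int j < int n + 1 - u0"
        then have "j < h" unfolding h_def by auto
        then show "(if int j \<ge> a2-a0 then int n+1 else int n) = (if int j > u2-u0 then 2 else 1) + int n - v0"
          using Rj[of j] RL[of j] tau_a[of j] j ha by (auto split: if_splits)
      qed
      have TI: "\<forall>i::nat. 1 \<le> i \<and> int i < int n + 1 - v0 \<longrightarrow>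
        (if int i \<ge> b2-b0 then int n+1 else int n) = (if int i > v2-v0 then 2 else 1) + int n - u0"
      proof (intro allI impI)
        fix i :: nat assume i: "1 \<le> i \<and> int i < int n + 1 - v0"
        then have "i < w" unfolding w_def by auto
        then show "(if int i \<ge> b2-b0 then int n+1 else int n) = (if int i > v2-v0 then 2 else 1) + int n - u0"
          using Ti[of i] TL[of i] tau_b[of i] i wb by (auto split: if_splits)
      qed
      show ?thesis unfolding cond_def using a0u0 b0v0 R0 T0 RJ TI by blast
    qed
    show "(\<alpha>, \<beta>, u, v) \<in> Tn' n" unfolding a b u v using core_fwd[OF c n Va Vb Vu Vv] .
  next
    assume mem: "(\<alpha>, \<beta>, u, v) \<in> Tn' n"
    have c: "cond n a0 a1 a2 b0 b1 b2 u0 u1 u2 v0 v1 v2"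
      using core_back[OF _ n] mem a b u v by simp
    have a0u0: "a0 = u0" and b0v0: "b0 = v0" using c unfolding cond_def by auto
    have ha: "length (tau n \<alpha>) = h" using al a0u0 h_def by simp
    have wb: "length (tau n \<beta>) = w" using bl b0v0 w_def by simp
    have cR: "\<forall>j::nat. 1 \<le> j \<and> int j < int n + 1 - u0 \<longrightarrow>
        (if int j \<ge> a2-a0 then int n+1 else int n) = (if int j > u2-u0 then 2 else 1) + int n - v0"
      and cT: "\<forall>i::nat. 1 \<le> i \<and> int i < int n + 1 - v0 \<longrightarrow>
        (if int i \<ge> b2-b0 then int n+1 else int n) = (if int i > v2-v0 then 2 else 1) + int n - u0"
      and cR0: "a0-a1+1 = (if v2-v0 \<le> int n - v0 then 1 else 0)"
        "(if a2 = a0 then int n+1 else int n) = v0-v1+1+int n - v0"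
      and cT0: "b0-b1+1 = (if u2-u0 \<le> int n - u0 then 1 else 0)"
        "(if b2 = b0 then int n+1 else int n) = u0-u1+1+int n - u0"
      using c unfolding cond_def by blast+
    have valid: "valid_pattern (Tn' n) w h (P0 n u v)"
      unfolding valid_pattern_def
    proof (intro conjI allI impI)
      show "0 < w" "0 < h" using wpos by auto
    next
      fix i j assume "i < w" "j < h"
      then show "P0 n u v i j \<in> Tn' n" unfolding u v
        using P0_mem[OF c Vu Vv n] w_def h_def by auto
    next
      fix i j assume "i + 1 < w" "j < h"
      then show "RIGHT (P0 n u v i j) = LEFT (P0 n u v (i + 1) j)"
        using P0_left[OF assms(5,4) n, where i="i+1" and j=j] hl by simp
    next
      fix i j assume "i < w" "j + 1 < h"
      then show "TOP (P0 n u v i j) = BOTTOM (P0 n u v i (j + 1))"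
        using P0_bottom[OF assms(4,5) n, where i=i and j="j+1"] wl by simp
    qed
    have RR: "right_labels w h (P0 n u v) = tau n \<alpha>"
    proof (rule nth_equalityI)
      show "length (right_labels w h (P0 n u v)) = length (tau n \<alpha>)" using ha by (simp add: right_labels_def)
      fix j assume "j < length (right_labels w h (P0 n u v))"
      then have j: "j < h" by (simp add: right_labels_def)
      have "right_labels w h (P0 n u v) ! j = RIGHT (P0 n u v (w - 1) j)"
        using j by (simp add: right_labels_def)
      also have "\<dots> = tau n \<alpha> ! j"
      proof (cases "j = 0")
        case True then show ?thesis using RL[of j] tau_a[of j] ha j cR0 by auto
      next
        case False
        then have "1 \<le> j \<and> int j < int n + 1 - u0" using j h_def by auto
        then show ?thesis using RL[of j] tau_a[of j] ha j cR False by (auto split: if_splits)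
      qed
      finally show "right_labels w h (P0 n u v) ! j = tau n \<alpha> ! j" .
    qed
    have TT: "top_labels w h (P0 n u v) = tau n \<beta>"
    proof (rule nth_equalityI)
      show "length (top_labels w h (P0 n u v)) = length (tau n \<beta>)" using wb by (simp add: top_labels_def)
      fix i assume "i < length (top_labels w h (P0 n u v))"
      then have i: "i < w" by (simp add: top_labels_def)
      have "top_labels w h (P0 n u v) ! i = TOP (P0 n u v i (h - 1))"
        using i by (simp add: top_labels_def)
      also have "\<dots> = tau n \<beta> ! i"
      proof (cases "i = 0")
        case True then show ?thesis using TL[of i] tau_b[of i] wb i cT0 by auto
      next
        case False
        then have "1 \<le> i \<and> int i < int n + 1 - v0" using i w_def by auto
        then show ?thesis using TL[of i] tau_b[of i] wb i cT False by (auto split: if_splits)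
      qed
      finally show "top_labels w h (P0 n u v) ! i = tau n \<beta> ! i" .
    qed
    have LL: "left_labels w h (P0 n u v) = tau n u"
    proof (rule nth_equalityI)
      show "length (left_labels w h (P0 n u v)) = length (tau n u)" using hl by (simp add: left_labels_def)
      fix j assume "j < length (left_labels w h (P0 n u v))"
      then have j: "j < h" by (simp add: left_labels_def)
      then show "left_labels w h (P0 n u v) ! j = tau n u ! j"
        using P0_left[OF assms(5,4) n, where i=0 and j=j] hl by (simp add: left_labels_def)
    qed
    have BB: "bottom_labels w h (P0 n u v) = tau n v"
    proof (rule nth_equalityI)
      show "length (bottom_labels w h (P0 n u v)) = length (tau n v)" using wl by (simp add: bottom_labels_def)
      fix i assume "i < length (bottom_labels w h (P0 n u v))"
      then have i: "i < w" by (simp add: bottom_labels_def)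
      then show "bottom_labels w h (P0 n u v) ! i = tau n v ! i"
        using P0_bottom[OF assms(4,5) n, where i=i and j=0] wl by (simp add: bottom_labels_def)
    qed
    show "\<exists>w h P. valid_pattern (Tn' n) w h P \<and>
            right_labels w h P = tau n \<alpha> \<and> top_labels w h P = tau n \<beta> \<and>
            left_labels w h P = tau n u \<and> bottom_labels w h P = tau n v"
      using valid RR TT LL BB by blast
  qed
qed


end
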